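(* Let $d\geq 7$ and let $f\in C^\infty([0,\infty))$ solve $$f''+\left(\frac{d-1}{y}-\frac{y}{2}\right)f'-\frac{d-1}{2y^2}\sin(2f)=0\quad (y>0)$$ with $f(0)=0$ and $f'(0)=a>0$. Let $h(y)=y^3f'(y)$. Then $h'(y)>0$ for all $y>0$, and $\lim_{y\to\infty}h(y)=+\infty$. *)

theory Defs
  imports Complex_Main
begin

text \<open>D is a tower of derivatives of f on the closed half-line [0,infinity)
  (one-sided derivative at 0); its existence means f is C-infinity there.\<close>
definition deriv_tower_halfline :: "(nat \<Rightarrow> real \<Rightarrow> real) \<Rightarrow> (real \<Rightarrow> real) \<Rightarrow> bool" where
  "deriv_tower_halfline D f \<longleftrightarrow> D 0 = f \<and>
     (\<forall>n x. x \<ge> 0 \<longrightarrow> (D n has_real_derivative D (Suc n) x) (at x within {0..}))"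

end

theory Submission
  imports Defs "HOL-Analysis.Analysis"
begin

lemma exp_lower_pow:
  fixes x :: real assumes "x \<ge> 0" "n \<ge> 1"
  shows "(x / real n) ^ n \<le> exp x"
proof -
  have "x / real n \<le> exp (x / real n)"
    using exp_ge_add_one_self[of "x / real n"] by linarith
  hence "(x / real n) ^ n \<le> exp (x / real n) ^ n"
    using assms by (intro power_mono) auto
  also have "\<dots> = exp x" using assms by (intro exp_divide_power_eq) auto
  finally show ?thesis .
qed

lemma key_identity:
  fixes y u w sn cs r :: real
  assumes y: "y > 0" and ode: "w + (r / y - y / 2) * u - r / (2 * y^2) * sn = 0"
  shows "(2*y*u + y^2*w) * (3 - r + y^2/2) + y^2*u*y + r * (1/2) * sn + r*(y/2)*(cs*(2*u))
     = ((4 - r)/y + y/2) * (y^2*u*(3 - r + y^2/2) + r*(y/2)* sn) + y^3*u/y^2*(2*(r-3) + r*cs)"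
proof -
  have w: "w = - (r / y - y / 2) * u + r / (2 * y^2) * sn" using ode by linarith
  show ?thesis unfolding w using y by (simp add: field_simps) algebra
qed

theorem mainTheorem4:
  fixes d :: nat and f :: "real \<Rightarrow> real" and D :: "nat \<Rightarrow> real \<Rightarrow> real" and a :: real
  assumes d: "d \<ge> 7"
    and smooth: "deriv_tower_halfline D f"
    and ode: "\<And>y. y > 0 \<Longrightarrow>
       D 2 y + ((real d - 1) / y - y / 2) * D 1 y - (real d - 1) / (2 * y\<^sup>2) * sin (2 * f y) = 0"
    and f0: "f 0 = 0"
    and fd0: "D 1 0 = a"
    and apos: "a > 0"
  shows "(\<forall>y>0. \<exists>h'. ((\<lambda>y. y ^ 3 * D 1 y) has_real_derivative h') (at y) \<and> h' > 0) \<and>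
         filterlim (\<lambda>y. y ^ 3 * D 1 y) at_top at_top"
proof -
  have Dw: "\<And>n x. x \<ge> 0 \<Longrightarrow> (D n has_real_derivative D (Suc n) x) (at x within {0..})"
    using smooth unfolding deriv_tower_halfline_def by auto
  have D0: "D 0 = f" using smooth unfolding deriv_tower_halfline_def by auto
  have Dat: "(D n has_real_derivative D (Suc n) x) (at x)" if "x > 0" for n x
  proof -
    have "(D n has_real_derivative D (Suc n) x) (at x within {0<..})"
      by (rule has_field_derivative_subset[OF Dw]) (use that in auto)
    thus ?thesis using that by (simp add: at_within_open[of x "{0<..}"])
  qed
  have fd: "(f has_real_derivative D 1 x) (at x)" if "x > 0" for x
    using Dat[OF that, of 0] D0 by simp
  have D1d: "(D 1 has_real_derivative D 2 x) (at x)" if "x > 0" for x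
    using Dat[OF that, of 1] by (simp add: numeral_2_eq_2)
  have cont: "continuous_on {0..} (D n)" for n
    using Dw by (auto intro!: DERIV_continuous simp: continuous_on_eq_continuous_within)
  have contf: "continuous_on {0..} f" using cont[of 0] D0 by simp
  have cont1: "continuous_on {0..} (D 1)" by (rule cont)

  define h where "h y = y ^ 3 * D 1 y" for y
  define K where "K y = y^2 * D 1 y * (4 - real d + y^2/2) + (real d - 1) * (y/2) * sin (2 * f y)" for y
  define E where "E y = y ^ (d - 5) * exp (- (y^2 / 4))" for y :: real
  define M where "M y = E y * K y" for y
  define Q where "Q y = E y * (h y / y^2 * (2*(real d - 4) + (real d - 1) * cos (2 * f y)))" for y

  have hd: "(h has_real_derivative K y) (at y)" if y: "y > 0" for y
  proof -
    have "(h has_real_derivative (3 * y^2 * D 1 y + y^3 * D 2 y)) (at y)"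
      unfolding h_def using D1d[OF y]
      by (auto intro!: derivative_eq_intros simp: algebra_simps)
    moreover have "3 * y^2 * D 1 y + y^3 * D 2 y = K y"
    proof -
      have w: "D 2 y = - ((real d - 1) / y - y / 2) * D 1 y + (real d - 1) / (2 * y\<^sup>2) * sin (2 * f y)"
        using ode[OF y] by linarith
      show ?thesis unfolding w K_def using y by (simp add: field_simps) algebra
    qed
    ultimately show ?thesis by simp
  qed

  have Kd: "(K has_real_derivative ((5 - real d)/y + y/2) * K y
       + h y / y^2 * (2*(real d - 4) + (real d - 1) * cos (2 * f y))) (at y)" if y: "y > 0" for y
  proof -
    have raw: "(K has_real_derivative (2*y*D 1 y + y^2*D 2 y) * (3 - (real d - 1) + y^2/2) + y^2*D 1 y*y
        + (real d - 1) * (1/2) * sin (2 * f y) + (real d - 1)*(y/2)*(cos (2 * f y)*(2*D 1 y))) (at y)"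
      unfolding K_def using D1d[OF y] fd[OF y]
      by (auto intro!: derivative_eq_intros simp: field_simps power2_eq_square power3_eq_cube power4_eq_xxxx)
    have eq1: "(2*y*D 1 y + y^2*D 2 y) * (3 - (real d - 1) + y^2/2) + y^2*D 1 y*y
        + (real d - 1) * (1/2) * sin (2 * f y) + (real d - 1)*(y/2)*(cos (2 * f y)*(2*D 1 y))
      = ((4 - (real d - 1))/y + y/2) * (y^2*D 1 y*(3 - (real d - 1) + y^2/2) + (real d - 1)*(y/2)* sin (2 * f y))
        + y^3*D 1 y/y^2*(2*((real d - 1)-3) + (real d - 1)*cos (2 * f y))"
      by (rule key_identity[OF y ode[OF y]])
    have eq2: "((4 - (real d - 1))/y + y/2) * (y^2*D 1 y*(3 - (real d - 1) + y^2/2) + (real d - 1)*(y/2)* sin (2 * f y))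
        + y^3*D 1 y/y^2*(2*((real d - 1)-3) + (real d - 1)*cos (2 * f y)) = ((5 - real d)/y + y/2) * K y
       + h y / y^2 * (2*(real d - 4) + (real d - 1) * cos (2 * f y))"
      unfolding K_def h_def by (simp add: algebra_simps)
    show ?thesis by (rule DERIV_cong[OF raw]) (use eq1 eq2 in simp)
  qed

  have Epos: "E y > 0" if "y > 0" for y using that unfolding E_def by simp
  have Ed: "(E has_real_derivative E y * ((real d - 5)/y - y/2)) (at y)" if y: "y > 0" for y
  proof -
    have raw: "(E has_real_derivative real (d - 5) * y ^ (d - 5 - 1) * exp (- (y^2 / 4))
        + y ^ (d - 5) * (exp (- (y^2 / 4)) * (- (2 * y / 4)))) (at y)"
      unfolding E_def by (auto intro!: derivative_eq_intros simp: algebra_simps)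
    have pw: "y ^ (d - 5) = y ^ (d - 5 - 1) * y"
    proof -
      have e: "d - 5 = Suc (d - 5 - 1)" using d by simp
      show ?thesis by (subst e) (simp add: mult.commute)
    qed
    have rd: "real (d - 5) = real d - 5" using d by simp
    have eq: "real (d - 5) * y ^ (d - 5 - 1) * exp (- (y^2 / 4))
        + y ^ (d - 5) * (exp (- (y^2 / 4)) * (- (2 * y / 4))) = E y * ((real d - 5)/y - y/2)"
      unfolding E_def pw rd using y by (simp add: field_simps)
    show ?thesis by (rule DERIV_cong[OF raw eq])
  qed

  have Md: "(M has_real_derivative Q y) (at y)" if y: "y > 0" for y
  proof -
    have raw: "(M has_real_derivative E y * ((real d - 5)/y - y/2) * K y + (((5 - real d)/y + y/2) * K y
       + h y / y^2 * (2*(real d - 4) + (real d - 1) * cos (2 * f y))) * E y) (at y)"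
      unfolding M_def by (rule DERIV_mult[OF Ed[OF y] Kd[OF y]])
    show ?thesis by (rule DERIV_cong[OF raw]) (simp add: Q_def algebra_simps add_divide_distrib[symmetric])
  qed
  have br: "2*(real d - 4) + (real d - 1) * cos (2 * f y) \<ge> 0" for y
  proof -
    have "(real d - 1) * cos (2 * f y) \<ge> (real d - 1) * (-1)"
      using d by (intro mult_left_mono) auto
    thus ?thesis using d by simp
  qed
  have Qnn: "Q y \<ge> 0" if "y > 0" "h y > 0" for y
    unfolding Q_def using that Epos[OF that(1)] br[of y] by (intro mult_nonneg_nonneg) auto

  have contK: "continuous_on {0..} K" unfolding K_def
    by (intro continuous_intros cont1 contf) auto
  have contE: "continuous_on S E" for S unfolding E_def by (intro continuous_intros) auto
  have contM: "continuous_on {0..} M" unfolding M_def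
    by (intro continuous_on_mult contE contK)
  have contH: "continuous_on {0..} h" unfolding h_def
    by (intro continuous_intros cont1)
  have h0: "h 0 = 0" unfolding h_def by simp
  have M0: "M 0 = 0" unfolding M_def K_def by simp

  obtain \<delta> where \<delta>: "\<delta> > 0" and near: "\<And>y. 0 \<le> y \<Longrightarrow> y \<le> \<delta> \<Longrightarrow> D 1 y > 0 \<and> cos (2 * f y) > 0"
  proof -
    obtain e1 where e1: "e1 > 0" "\<And>x'. x' \<in> {0..} \<Longrightarrow> dist x' 0 < e1 \<Longrightarrow> dist (D 1 x') (D 1 0) < a"
      using cont1 apos unfolding continuous_on_iff by (metis atLeast_iff order_refl)
    have contc: "continuous_on {0..} (\<lambda>y. cos (2 * f y))" by (intro continuous_intros contf)
    obtain e2 where e2: "e2 > 0" "\<And>x'. x' \<in> {0..} \<Longrightarrow> dist x' 0 < e2 \<Longrightarrow> dist (cos (2 * f x')) (cos (2 * f 0)) < 1"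
      using contc unfolding continuous_on_iff by (metis atLeast_iff order_refl zero_less_one)
    show ?thesis
    proof (rule that[of "min e1 e2 / 2"])
      show "min e1 e2 / 2 > 0" using e1 e2 by simp
      fix y assume y: "0 \<le> y" "y \<le> min e1 e2 / 2"
      have "dist (D 1 y) (D 1 0) < a" using e1 e2 y by (intro e1(2)) (auto simp: dist_real_def)
      hence 1: "D 1 y > 0" using fd0 by (auto simp: dist_real_def)
      have "dist (cos (2 * f y)) (cos (2 * f 0)) < 1" using e1 e2 y by (intro e2(2)) (auto simp: dist_real_def)
      hence "cos (2 * f y) > 0" using f0 by (auto simp: dist_real_def)
      thus "D 1 y > 0 \<and> cos (2 * f y) > 0" using 1 by simp
    qed
  qed

  have Mpos0: "M y > 0" if y: "0 < y" "y \<le> \<delta>" for y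
  proof -
    have "M 0 < M y"
    proof (rule DERIV_pos_imp_increasing_open[OF y(1)])
      fix x assume x: "0 < x" "x < y"
      have n: "D 1 x > 0 \<and> cos (2 * f x) > 0" using near[of x] x y by auto
      have "Q x > 0" unfolding Q_def h_def using Epos[OF x(1)] x n d
        by (intro mult_pos_pos divide_pos_pos add_pos_nonneg) auto
      thus "\<exists>l. DERIV M x :> l \<and> l > 0" using Md[OF x(1)] by blast
    next
      show "continuous_on {0..y} M" using contM by (rule continuous_on_subset) auto
    qed
    thus ?thesis using M0 by simp
  qed
  have Kpos0: "K y > 0" if "0 < y" "y \<le> \<delta>" for y
    using Mpos0[OF that] Epos[OF that(1)] unfolding M_def by (simp add: zero_less_mult_iff)

  have hpos_gen: "h z > 0" if "0 < z" "\<And>x. 0 < x \<Longrightarrow> x < z \<Longrightarrow> K x > 0" for z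
  proof -
    have "h 0 < h z"
    proof (rule DERIV_pos_imp_increasing_open[OF that(1)])
      fix x assume "0 < x" "x < z"
      thus "\<exists>l. DERIV h x :> l \<and> l > 0" using hd that(2) by blast
    next
      show "continuous_on {0..z} h" using contH by (rule continuous_on_subset) auto
    qed
    thus ?thesis using h0 by simp
  qed

  have Mmono: "M a1 \<le> M b1" if "0 < a1" "a1 \<le> b1" "\<And>x. a1 < x \<Longrightarrow> x < b1 \<Longrightarrow> h x > 0" for a1 b1
  proof (rule DERIV_nonneg_imp_increasing_open[OF that(2)])
    fix x assume x: "a1 < x" "x < b1"
    hence "x > 0" using that by simp
    thus "\<exists>l. DERIV M x :> l \<and> l \<ge> 0" using Md Qnn that(3)[OF x] by blast
  next
    show "continuous_on {a1..b1} M" using contM by (rule continuous_on_subset) (use that in auto)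
  qed

  have Kpos: "K y > 0" if "y > 0" for y
  proof (rule ccontr)
    assume "\<not> K y > 0"
    hence Ky: "K y \<le> 0" by simp
    define T where "T = {x \<in> {\<delta>..}. K x \<le> 0}"
    have yT: "y \<in> T" using Ky Kpos0[OF that] unfolding T_def by force
    have clT: "closed T" unfolding T_def
      by (intro continuous_on_closed_Collect_le continuous_on_subset[OF contK]) (use \<delta> in auto)
    have bdd: "bdd_below T" unfolding T_def by (auto intro: bdd_belowI[of _ \<delta>])
    define y0 where "y0 = Inf T"
    have y0T: "y0 \<in> T" unfolding y0_def using closed_contains_Inf[OF _ bdd clT] yT by auto
    hence y0: "y0 \<ge> \<delta>" "K y0 \<le> 0" unfolding T_def by auto
    have y0d: "y0 > \<delta>" using y0 Kpos0[OF \<delta> order_refl] by (cases "y0 = \<delta>") auto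
    have below: "K x > 0" if "0 < x" "x < y0" for x
    proof (cases "x \<le> \<delta>")
      case True thus ?thesis using Kpos0 that by simp
    next
      case False
      show ?thesis
      proof (rule ccontr)
        assume "\<not> K x > 0"
        hence "x \<in> T" unfolding T_def using False by auto
        hence "y0 \<le> x" unfolding y0_def using bdd by (intro cInf_lower)
        thus False using that by simp
      qed
    qed
    have "M \<delta> \<le> M y0"
    proof (rule Mmono[OF \<delta>])
      show "\<delta> \<le> y0" using y0 by simp
      fix x assume "\<delta> < x" "x < y0"
      thus "h x > 0" using \<delta> below by (intro hpos_gen) auto
    qed
    hence "M y0 > 0" using Mpos0[OF \<delta> order_refl] by simp
    hence "K y0 > 0" using Epos[of y0] y0d \<delta> unfolding M_def by (simp add: zero_less_mult_iff)
    thus False using y0 by simp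
  qed
  have hpos: "h y > 0" if "y > 0" for y using Kpos that by (intro hpos_gen) auto

  have part1: "\<forall>y>0. \<exists>h'. ((\<lambda>y. y ^ 3 * D 1 y) has_real_derivative h') (at y) \<and> h' > 0"
    using hd Kpos unfolding h_def by blast

  define c where "c = M \<delta>"
  have c: "c > 0" unfolding c_def using Mpos0[OF \<delta> order_refl] .
  define n where "n = d - 5"
  have n: "n \<ge> 2" using d unfolding n_def by simp
  define B where "B = (4 * real n) ^ n / c"
  define Y where "Y = max 1 (max \<delta> B)"
  have KY: "K y \<ge> 1" if y: "y \<ge> Y" for y
  proof -
    have y1: "y \<ge> 1" "y \<ge> \<delta>" "y \<ge> B" using y unfolding Y_def by auto
    have ypos: "y > 0" using y1 by simp
    have "c \<le> M y" unfolding c_def using \<delta> y1 hpos by (intro Mmono) auto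
    hence "c / E y \<le> K y" using Epos[OF ypos] unfolding M_def by (simp add: field_simps)
    have "c / E y = c * exp (y^2/4) / y ^ n"
      unfolding E_def n_def by (simp add: exp_minus field_simps)
    have "(y^2/4 / real n) ^ n \<le> exp (y^2/4)"
      using n by (intro exp_lower_pow) auto
    have "(y^2/4 / real n) ^ n = y ^ n * (y ^ n / (4 * real n) ^ n)"
      by (simp add: power_divide power_mult_distrib power2_eq_square field_simps)
    have "y ^ n \<ge> y" using y1 n by (metis le_trans one_le_numeral power_increasing power_one_right)
    have "y / (4 * real n) ^ n \<ge> 1 / c"
      using y1(3) c n unfolding B_def by (simp add: field_simps)
        have ypos': "y ^ n > 0" using ypos by simp
    have "1 \<le> c * (y / (4 * real n) ^ n)" using \<open>y / (4 * real n) ^ n \<ge> 1 / c\<close> c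
      by (simp add: field_simps)
    also have "\<dots> \<le> c * (y ^ n / (4 * real n) ^ n)"
      using \<open>y ^ n \<ge> y\<close> c by (intro mult_left_mono divide_right_mono) auto
    also have "\<dots> = c * (y ^ n * (y ^ n / (4 * real n) ^ n)) / y ^ n" using ypos' by simp
    also have "\<dots> = c * (y^2/4 / real n) ^ n / y ^ n"
      using \<open>(y^2/4 / real n) ^ n = y ^ n * (y ^ n / (4 * real n) ^ n)\<close> by simp
    also have "\<dots> \<le> c * exp (y^2/4) / y ^ n"
      using \<open>(y^2/4 / real n) ^ n \<le> exp (y^2/4)\<close> c ypos' by (intro divide_right_mono mult_left_mono) auto
    also have "\<dots> = c / E y" using \<open>c / E y = c * exp (y^2/4) / y ^ n\<close> by simp
    also have "\<dots> \<le> K y" using \<open>c / E y \<le> K y\<close> .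
    finally show ?thesis .
  qed
  have Y1: "Y \<ge> 1" unfolding Y_def by simp
  have hgrow: "h Y + (y - Y) \<le> h y" if y: "y \<ge> Y" for y
  proof -
    have "h Y - Y \<le> h y - y"
    proof (rule DERIV_nonneg_imp_increasing_open[OF y, where f = "\<lambda>t. h t - t"])
      fix x assume x: "Y < x" "x < y"
      hence xp: "x > 0" using Y1 by simp
      have "((\<lambda>t. h t - t) has_real_derivative K x - 1) (at x)"
        by (intro DERIV_diff hd[OF xp] DERIV_ident)
      moreover have "K x - 1 \<ge> 0" using KY[of x] x by simp
      ultimately show "\<exists>l. ((\<lambda>t. h t - t) has_real_derivative l) (at x) \<and> l \<ge> 0" by blast
    next
      show "continuous_on {Y..y} (\<lambda>t. h t - t)"
        using Y1 by (intro continuous_intros continuous_on_subset[OF contH]) auto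
    qed
    thus ?thesis by simp
  qed
  have "filterlim h at_top at_top"
    unfolding filterlim_at_top
  proof
    fix Z :: real
    show "\<forall>\<^sub>F y in at_top. Z \<le> h y"
      unfolding eventually_at_top_linorder
    proof (intro exI allI impI)
      fix y assume y: "y \<ge> max Y (Y + Z - h Y)"
      thus "Z \<le> h y" using hgrow[of y] by simp
    qed
  qed
  thus ?thesis using part1 unfolding h_def by simp
qed

end
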